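(* For a barcode $f$, the lifespan series $L(f)$, and hence all $L(f^{\wedge p})$ for $p \ge 1$, can be determined from $C^{\wedge}(f)$: if $f, f'$ are barcodes with $C^{\wedge}(f) = C^{\wedge}(f')$, then $L(f^{\wedge p}) = L(f'^{\wedge p})$ for all integers $p\ge 1$.
   Context: A barcode is a finite formal sum $f = \sum_{i=1}^n x^{\alpha_i}y^{\ell_i}$ with $n\ge 0$, $\alpha_i \in \mathbb{R}$, $\ell_i \in \mathbb{R}_{>0}$ (a finite multiset of bars). Its $p$-th exterior power ($p\ge1$) is $f^{\wedge p} = \sum_{1\le i_1<\cdots<i_p\le n} x^{\alpha_{i_1}+\cdots+\alpha_{i_p}}y^{\min\{\ell_{i_1},\ldots,\ell_{i_p}\}}$ (zero if $p>n$). The lifespan series is $L(f) = \sum_{i=1}^n x^{\ell_i}$, the critical series is $C(f) = \sum_i x^{\alpha_i} - \sum_i x^{\alpha_i+\ell_i}$ (finite integer combinations of symbols $x^g$, $g\in\mathbb{R}$), and $C^{\wedge}(f) = \sum_{p\ge1} C(f^{\wedge p})z^p$ with $z$ an indeterminate. *)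

theory Defs
  imports Complex_Main "HOL-Library.Multiset"
begin

text \<open>A barcode sum_{i=1}^n x^alpha_i y^l_i is represented by the list of its bars
  [(alpha_1,l_1),...,(alpha_n,l_n)]; only the multiset of bars matters.\<close>

definition is_barcode :: "(real \<times> real) list \<Rightarrow> bool" where
  "is_barcode f \<longleftrightarrow> (\<forall>b \<in> set f. snd b > 0)"

definition ext_pow :: "nat \<Rightarrow> (real \<times> real) list \<Rightarrow> (real \<times> real) multiset" where
  "ext_pow p f = image_mset
     (\<lambda>S. (\<Sum>i\<in>S. fst (f ! i), Min ((\<lambda>i. snd (f ! i)) ` S)))
     (mset_set {S. S \<subseteq> {..<length f} \<and> card S = p})"

text \<open>Lifespan series sum_i x^{l_i}: the multiset of exponents.\<close>
definition lifespan :: "(real \<times> real) multiset \<Rightarrow> real multiset" where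
  "lifespan B = image_mset snd B"

text \<open>Critical series sum_i x^{alpha_i} - sum_i x^{alpha_i + l_i}, as the coefficient
  function g \<mapsto> coefficient of x^g (finitely supported integer function).\<close>
definition critical :: "(real \<times> real) multiset \<Rightarrow> real \<Rightarrow> int" where
  "critical B g = int (count (image_mset fst B) g)
                 - int (count (image_mset (\<lambda>(a, l). a + l) B) g)"

text \<open>C^wedge(f) = sum_{p>=1} C(f^p) z^p, as the coefficient function p \<mapsto> C(f^p)
  (coefficient 0 at p = 0).\<close>
definition critical_ext :: "(real \<times> real) list \<Rightarrow> nat \<Rightarrow> real \<Rightarrow> int" where
  "critical_ext f p = (if p \<ge> 1 then critical (ext_pow p f) else (\<lambda>_. 0))"

end

theory Submission
  imports Defs "HOL-Combinatorics.List_Permutation"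
begin

definition subs :: "nat \<Rightarrow> nat \<Rightarrow> nat set set" where
  "subs p n = {S. S \<subseteq> {..<n} \<and> card S = p}"

definition LM :: "nat \<Rightarrow> real list \<Rightarrow> real multiset" where
  "LM p ls = image_mset (\<lambda>S. Min ((!) ls ` S)) (mset_set (subs p (length ls)))"

definition T :: "nat \<Rightarrow> real list \<Rightarrow> real" where
  "T p ls = sum_mset (LM p ls)"

lemma subs_finite: "finite (subs p n)"
  unfolding subs_def by (rule finite_subset[of _ "Pow {..<n}"]) auto

lemma subs_Suc: "subs (Suc q) (Suc n) = subs (Suc q) n \<union> insert n ` subs q n"
proof
  show "subs (Suc q) (Suc n) \<subseteq> subs (Suc q) n \<union> insert n ` subs q n"
  proof
    fix S assume S: "S \<in> subs (Suc q) (Suc n)"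
    show "S \<in> subs (Suc q) n \<union> insert n ` subs q n"
    proof (cases "n \<in> S")
      case True
      have fin: "finite S" using S unfolding subs_def by (auto intro: finite_subset)
      have "S - {n} \<in> subs q n" using S True fin unfolding subs_def by auto
      moreover have "S = insert n (S - {n})" using True by auto
      ultimately show ?thesis by blast
    next
      case False
      then have "S \<in> subs (Suc q) n" using S unfolding subs_def using less_Suc_eq by auto
      then show ?thesis by blast
    qed
  qed
next
  show "subs (Suc q) n \<union> insert n ` subs q n \<subseteq> subs (Suc q) (Suc n)"
  proof
    fix S assume "S \<in> subs (Suc q) n \<union> insert n ` subs q n"
    then show "S \<in> subs (Suc q) (Suc n)"
    proof
      assume "S \<in> subs (Suc q) n" then show ?thesis unfolding subs_def by auto
    next
      assume "S \<in> insert n ` subs q n"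
      then obtain S' where S': "S' \<in> subs q n" "S = insert n S'" by blast
      have fin: "finite S'" using S' unfolding subs_def by (auto intro: finite_subset)
      have "n \<notin> S'" using S' unfolding subs_def by auto
      then show ?thesis using S' fin unfolding subs_def by auto
    qed
  qed
qed

lemma card_subs: "card (subs q n) = n choose q"
  unfolding subs_def using n_subsets[of "{..<n}" q] by simp

lemma LM_rec:
  assumes "\<forall>y\<in>set xs. x \<le> y"
  shows "LM (Suc q) (xs @ [x]) = LM (Suc q) xs + replicate_mset (length xs choose q) x"
proof -
  let ?n = "length xs"
  have disj: "subs (Suc q) ?n \<inter> insert ?n ` subs q ?n = {}"
    unfolding subs_def by auto
  have inj: "inj_on (insert ?n) (subs q ?n)"
  proof (rule inj_onI)
    fix S1 S2 assume "S1 \<in> subs q ?n" "S2 \<in> subs q ?n" "insert ?n S1 = insert ?n S2"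
    moreover have "?n \<notin> S1" "?n \<notin> S2" using calculation unfolding subs_def by auto
    ultimately show "S1 = S2" by (metis insert_ident)
  qed
  have A: "image_mset (\<lambda>S. Min ((!) (xs @ [x]) ` S)) (mset_set (subs (Suc q) ?n)) = LM (Suc q) xs"
    unfolding LM_def
  proof (rule image_mset_cong)
    fix S assume "S \<in># mset_set (subs (Suc q) ?n)"
    then have "S \<subseteq> {..<?n}" using subs_finite unfolding subs_def by auto
    then have "(!) (xs @ [x]) ` S = (!) xs ` S" by (auto simp: nth_append)
    then show "Min ((!) (xs @ [x]) ` S) = Min ((!) xs ` S)" by simp
  qed
  have B: "image_mset (\<lambda>S. Min ((!) (xs @ [x]) ` S)) (mset_set (insert ?n ` subs q ?n))
       = replicate_mset (?n choose q) x"
  proof -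
    have "mset_set (insert ?n ` subs q ?n) = image_mset (insert ?n) (mset_set (subs q ?n))"
      using image_mset_mset_set[OF inj] by simp
    moreover have "image_mset (\<lambda>S. Min ((!) (xs @ [x]) ` S)) (image_mset (insert ?n) (mset_set (subs q ?n)))
        = image_mset (\<lambda>S. x) (mset_set (subs q ?n))"
      unfolding multiset.map_comp
    proof (rule image_mset_cong)
      fix S assume "S \<in># mset_set (subs q ?n)"
      then have S: "S \<subseteq> {..<?n}" "finite S" using subs_finite unfolding subs_def
        by (auto intro: finite_subset)
      then have "(!) (xs @ [x]) ` insert ?n S = insert x ((!) xs ` S)" by (auto simp: nth_append)
      moreover have "Min (insert x ((!) xs ` S)) = x"
        using S assms by (intro Min_insert2) auto
      ultimately show "((\<lambda>S. Min ((!) (xs @ [x]) ` S)) \<circ> insert ?n) S = x" by simp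
    qed
    ultimately show ?thesis by (simp add: image_mset_const_eq card_subs)
  qed
  show ?thesis
    unfolding LM_def[of _ "xs @ [x]"]
    using subs_Suc[of q ?n] mset_set_Union[OF subs_finite finite_imageI[OF subs_finite] disj] A B by simp
qed


lemma LM_perm:
  assumes "mset ls = mset ls'"
  shows "LM p ls = LM p ls'"
proof -
  obtain h where h: "bij_betw h {..<length ls} {..<length ls'}" "\<forall>i<length ls. ls ! i = ls' ! (h i)"
    using permutation_Ex_bij[OF assms] by blast
  have len: "length ls' = length ls" using assms by (metis size_mset)
  let ?n = "length ls"
  have injh: "inj_on h {..<?n}" using h(1) bij_betw_def by blast
  have imh: "h ` {..<?n} = {..<?n}" using h(1) len unfolding bij_betw_def by simp
  have inj: "inj_on ((`) h) (subs p ?n)"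
    by (rule inj_on_image, rule inj_on_subset[OF injh]) (auto simp: subs_def)
  have eq: "(`) h ` subs p ?n = subs p ?n"
  proof
    show "(`) h ` subs p ?n \<subseteq> subs p ?n"
    proof
      fix S assume "S \<in> (`) h ` subs p ?n"
      then obtain S' where S': "S' \<in> subs p ?n" "S = h ` S'" by blast
      then have "S' \<subseteq> {..<?n}" "card S' = p" unfolding subs_def by auto
      moreover have "card (h ` S') = card S'"
        using card_image[OF inj_on_subset[OF injh calculation(1)]] .
      moreover have "h ` S' \<subseteq> {..<?n}" using image_mono[OF calculation(1), of h] imh by simp
      ultimately show "S \<in> subs p ?n" using S'(2) unfolding subs_def by simp
    qed
  next
    show "subs p ?n \<subseteq> (`) h ` subs p ?n"
    proof
      fix S assume S: "S \<in> subs p ?n"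
      then have Ssub: "S \<subseteq> {..<?n}" unfolding subs_def by auto
      define S' where "S' = {i\<in>{..<?n}. h i \<in> S}"
      have "h ` S' = S"
      proof (intro equalityI subsetI)
        fix y assume "y \<in> h ` S'" then show "y \<in> S" unfolding S'_def by blast
      next
        fix y assume y: "y \<in> S"
        then have "y \<in> h ` {..<?n}" using Ssub imh by blast
        then obtain i where "i < ?n" "y = h i" by blast
        then show "y \<in> h ` S'" using y unfolding S'_def by blast
      qed
      moreover have "S' \<subseteq> {..<?n}" unfolding S'_def by auto
      moreover have "card S' = p"
      proof -
        have "card (h ` S') = card S'" using card_image[OF inj_on_subset[OF injh calculation(2)]] .
        then show ?thesis using calculation(1) S unfolding subs_def by simp
      qed
      ultimately show "S \<in> (`) h ` subs p ?n" unfolding subs_def by blast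
    qed
  qed
  have "LM p ls' = image_mset (\<lambda>S. Min ((!) ls' ` S)) (mset_set ((`) h ` subs p ?n))"
    unfolding LM_def len eq ..
  also have "\<dots> = image_mset (\<lambda>S. Min ((!) ls' ` S)) (image_mset ((`) h) (mset_set (subs p ?n)))"
    using image_mset_mset_set[OF inj] by simp
  also have "\<dots> = LM p ls"
    unfolding multiset.map_comp LM_def
  proof (rule image_mset_cong)
    fix S assume "S \<in># mset_set (subs p ?n)"
    then have "S \<subseteq> {..<?n}" using subs_finite unfolding subs_def by auto
    then have "(!) ls' ` h ` S = (!) ls ` S" using h(2) unfolding image_image
      by (intro image_cong) auto
    then show "((\<lambda>S. Min ((!) ls' ` S)) \<circ> (`) h) S = Min ((!) ls ` S)" by simp
  qed
  finally show ?thesis ..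
qed

lemma LM_big: assumes "p > length ls" shows "LM p ls = {#}"
proof -
  have "S \<notin> subs p (length ls)" for S
  proof
    assume "S \<in> subs p (length ls)"
    then have "S \<subseteq> {..<length ls}" "card S = p" unfolding subs_def by auto
    then have "p \<le> length ls" using card_mono[OF finite_lessThan, of S "length ls"] by simp
    then show False using assms by simp
  qed
  then have "subs p (length ls) = {}" by blast
  then show ?thesis unfolding LM_def by simp
qed

lemma T_top: "ls \<noteq> [] \<Longrightarrow> T (length ls) ls = Min (set ls)"
proof -
  assume ne: "ls \<noteq> []"
  have e: "S = {..<length ls}" if "S \<subseteq> {..<length ls}" "card S = length ls" for S
    using card_subset_eq[OF finite_lessThan that(1)] that(2) by simp
  have "subs (length ls) (length ls) = {{..<length ls}}" unfolding subs_def
  proof (intro equalityI subsetI)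
    fix S assume "S \<in> {S. S \<subseteq> {..<length ls} \<and> card S = length ls}"
    then show "S \<in> {{..<length ls}}" using e by blast
  qed simp
  moreover have "(!) ls ` {..<length ls} = set ls" by (auto simp: in_set_conv_nth)
  ultimately have "LM (length ls) ls = {#Min (set ls)#}" unfolding LM_def by simp
  then show ?thesis unfolding T_def by simp
qed

lemma T_rec:
  assumes "\<forall>y\<in>set xs. x \<le> y"
  shows "T (Suc q) (xs @ [x]) = T (Suc q) xs + real (length xs choose q) * x"
  unfolding T_def LM_rec[OF assms] by simp

lemma core:
  "length ls = n \<Longrightarrow> length ls' = n \<Longrightarrow> (\<forall>p\<ge>1. T p ls = T p ls') \<Longrightarrow> \<forall>p\<ge>1. LM p ls = LM p ls'"
proof (induction n arbitrary: ls ls')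
  case 0
  then show ?case by simp
next
  case (Suc n)
  have ne: "ls \<noteq> []" "ls' \<noteq> []" using Suc.prems by auto
  define x where "x = Min (set ls)"
  have xx: "Min (set ls') = x"
    using Suc.prems(3)[rule_format, of "Suc n"] T_top[OF ne(1)] T_top[OF ne(2)] Suc.prems(1,2)
    unfolding x_def by simp
  have xin: "x \<in> set ls" "x \<in> set ls'"
    using ne xx Min_in[of "set ls"] Min_in[of "set ls'"] unfolding x_def by auto
  define xs where "xs = remove1 x ls"
  define xs' where "xs' = remove1 x ls'"
  have m: "mset ls = mset (xs @ [x])" "mset ls' = mset (xs' @ [x])"
    using xin unfolding xs_def xs'_def by simp_all
  have len: "length xs = n" "length xs' = n"
    using xin Suc.prems(1,2) unfolding xs_def xs'_def by (simp_all add: length_remove1)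
  have le: "\<forall>y\<in>set xs. x \<le> y" "\<forall>y\<in>set xs'. x \<le> y"
    using set_remove1_subset[of x ls] set_remove1_subset[of x ls'] xx
    unfolding xs_def xs'_def x_def by (auto, metis List.finite_set Min_le subsetD)
  have Teq: "T p xs = T p xs'" if "p \<ge> 1" for p
  proof -
    obtain q where q: "p = Suc q" using \<open>p \<ge> 1\<close> by (cases p) auto
    have "T p ls = T p (xs @ [x])" "T p ls' = T p (xs' @ [x])"
      unfolding T_def using LM_perm[OF m(1)] LM_perm[OF m(2)] by auto
    then show ?thesis using Suc.prems(3) \<open>p \<ge> 1\<close> T_rec[OF le(1), of q] T_rec[OF le(2), of q] len q
      by simp
  qed
  have IH: "\<forall>p\<ge>1. LM p xs = LM p xs'" using Suc.IH[OF len] Teq by blast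
  show ?case
  proof (intro allI impI)
    fix p :: nat assume p: "p \<ge> 1"
    obtain q where q: "p = Suc q" using p by (cases p) auto
    have "LM p ls = LM p (xs @ [x])" "LM p ls' = LM p (xs' @ [x])" using LM_perm[OF m(1)] LM_perm[OF m(2)] by auto
    then show "LM p ls = LM p ls'" using LM_rec[OF le(1), of q] LM_rec[OF le(2), of q] IH p q len
      by simp
  qed
qed

lemma crit_sum:
  assumes "critical B1 = critical B2"
  shows "sum_mset (image_mset snd B1) = sum_mset (image_mset snd B2)"
proof -
  define A1 where "A1 = image_mset fst B1"
  define A2 where "A2 = image_mset fst B2"
  define D1 where "D1 = image_mset (\<lambda>(a, l). a + l) B1"
  define D2 where "D2 = image_mset (\<lambda>(a, l). a + l) B2"
  have "A1 + D2 = A2 + D1"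
  proof (rule multiset_eqI)
    fix g
    have "int (count A1 g) - int (count D1 g) = int (count A2 g) - int (count D2 g)"
      using fun_cong[OF assms, of g] unfolding critical_def A1_def A2_def D1_def D2_def by simp
    then show "count (A1 + D2) g = count (A2 + D1) g" by simp
  qed
  then have "sum_mset A1 + sum_mset D2 = sum_mset A2 + sum_mset D1"
    by (metis sum_mset.union)
  moreover have "sum_mset (image_mset (\<lambda>(a, l). a + l) B) = sum_mset (image_mset fst B) + sum_mset (image_mset snd B)"
    for B :: "(real \<times> real) multiset"
    by (induct B) auto
  ultimately show ?thesis unfolding A1_def A2_def D1_def D2_def by simp
qed

lemma bridge: "lifespan (ext_pow p f) = LM p (map snd f)"
  unfolding lifespan_def ext_pow_def LM_def multiset.map_comp length_map subs_def
proof (rule image_mset_cong)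
  fix S assume "S \<in># mset_set {S. S \<subseteq> {..<length f} \<and> card S = p}"
  then have "S \<subseteq> {..<length f}" using subs_finite[of p "length f"] unfolding subs_def by auto
  then have "(\<lambda>i. snd (f ! i)) ` S = (!) (map snd f) ` S" by (intro image_cong) auto
  then show "(snd \<circ> (\<lambda>S. (\<Sum>i\<in>S. fst (f ! i), Min ((\<lambda>i. snd (f ! i)) ` S)))) S = Min ((!) (map snd f) ` S)"
    by simp
qed

theorem proposition9:
  fixes f f' :: "(real \<times> real) list"
  assumes "is_barcode f" and "is_barcode f'"
    and "critical_ext f = critical_ext f'"
  shows "\<forall>p::nat. p \<ge> 1 \<longrightarrow> lifespan (ext_pow p f) = lifespan (ext_pow p f')"
proof -
  define ls where "ls = map snd f"
  define ls' where "ls' = map snd f'"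
  have Teq: "T p ls = T p ls'" if "p \<ge> 1" for p
  proof -
    have "critical (ext_pow p f) = critical (ext_pow p f')"
      using fun_cong[OF assms(3), of p] that unfolding critical_ext_def by simp
    then show ?thesis using crit_sum unfolding T_def ls_def ls'_def bridge[symmetric] lifespan_def
      by blast
  qed
  have pos: "\<forall>y\<in>set ls. y > 0" "\<forall>y\<in>set ls'. y > 0"
    using assms(1,2) unfolding is_barcode_def ls_def ls'_def by auto
  have lenle: "length a \<le> length b"
    if "\<forall>p\<ge>1. T p a = T p b" "\<forall>y\<in>set a. y > 0" for a b :: "real list"
  proof (rule ccontr)
    assume "\<not> length a \<le> length b"
    then have lt: "length b < length a" by simp
    then have ne: "a \<noteq> []" by auto
    have "Min (set a) > 0" using that(2) ne by (simp add: Min_gr_iff)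
    then have "T (length a) a > 0" using T_top[OF ne] by simp
    moreover have "T (length a) b = 0" unfolding T_def using LM_big[OF lt] by simp
    moreover have "length a \<ge> 1" using lt by simp
    ultimately show False using that(1) by fastforce
  qed
  have len: "length ls = length ls'"
    using lenle[of ls ls'] lenle[of ls' ls] Teq pos by simp
  have "\<forall>p\<ge>1. LM p ls = LM p ls'" using core[OF refl len[symmetric]] Teq by blast
  then show ?thesis unfolding bridge ls_def ls'_def by blast
qed

end
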